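(* Let $G=(V,E)$ be a $D$-regular unweighted Ricci-flat graph with $D\ge2$ and $\mu\equiv\mu_0>0$, and let $\alpha\in(0,1)$. Let $x_*\in V$ and $\psi:V\to\mathbb R$ with $\psi(x_* )>0$ and $\psi(y)>0$ for all $y\sim x_*$. Let $v:V\to\mathbb R$ be such that $M(x):=\psi(x)\mathcal L_\alpha(v)(x)$ satisfies $M(x_* )>0$ and $M(x_* )\ge M(y)$ for all $y\sim x_*$. Then $$\mathcal C_\alpha(v)(x_* )\ge F_\alpha(Lv(x_* ))-\frac1{\mu_0}\mathcal L_\alpha(v)(x_* )\sum_{y\sim x_*}e^{v(y)-v(x_* )}\frac{|\psi(x_* )-\psi(y)|}{\psi(y)},$$ where $F_\alpha(a)=\frac{D}{\mu_0^2}\exp\big(-\frac{\mu_0(1-\alpha)}Da\big)\big[\exp\big(\frac{2(1-\alpha)\mu_0}Da\big)+\frac{1-\alpha}\alpha\exp\big(-\frac{2\alpha\mu_0}Da\big)-\frac1\alpha\big]$.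
   Context: Unweighted: $w_{xy}=1$. $\Delta u(x)=\frac1{\mu_0}\sum_{y\sim x}(u(y)-u(x))$, $L=-\Delta$, $\Psi_H(v)(x)=\frac1{\mu_0}\sum_{y\sim x}H(v(y)-v(x))$, $\Upsilon'(z)=e^z-1$. $\mathcal L_\alpha(v)(x)=-\frac1\alpha\Psi_{\Upsilon'}(\alpha v)(x)$; $\mathcal C_\alpha(v)(x)=\frac1{\mu_0}\sum_{y\sim x}e^{\alpha(v(y)-v(x))}(\Psi_{\Upsilon'}(v)(y)-\Psi_{\Upsilon'}(v)(x))$. Ricci-flat: $G$ is $D$-regular and for every $x$, with $N(x)=\{x\}\cup\{y:y\sim x\}$, there exist $\eta_1,\dots,\eta_D:N(x)\to V$ with (i) $\eta_i(y)\sim y$; (ii) $\eta_i(y)\neq\eta_j(y)$ for $i\ne j$; (iii) for each $i$, $(\eta_i(\eta_j(x)))_j$ and $(\eta_j(\eta_i(x)))_j$ coincide as multisets. *)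

theory Defs
  imports "HOL-Analysis.Analysis" "HOL-Library.Multiset"
begin

text \<open>Graphs: vertex set is the whole type 'a, adjacency E (symmetric, irreflexive).
 Unweighted (w_xy = 1), constant measure mu0.\<close>

definition nbrs :: "('a \<Rightarrow> 'a \<Rightarrow> bool) \<Rightarrow> 'a \<Rightarrow> 'a set" where
  "nbrs E x = {y. E x y}"

definition regular_graph :: "('a \<Rightarrow> 'a \<Rightarrow> bool) \<Rightarrow> nat \<Rightarrow> bool" where
  "regular_graph E D \<longleftrightarrow> (\<forall>x y. E x y \<longrightarrow> E y x) \<and> (\<forall>x. \<not> E x x)
     \<and> (\<forall>x. finite (nbrs E x) \<and> card (nbrs E x) = D)"

definition ricci_flat :: "('a \<Rightarrow> 'a \<Rightarrow> bool) \<Rightarrow> nat \<Rightarrow> bool" where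
  "ricci_flat E D \<longleftrightarrow> regular_graph E D \<and>
    (\<forall>x. \<exists>\<eta> :: nat \<Rightarrow> 'a \<Rightarrow> 'a.
       (\<forall>i<D. \<forall>y \<in> insert x (nbrs E x). E y (\<eta> i y)) \<and>
       (\<forall>i<D. \<forall>j<D. i \<noteq> j \<longrightarrow> (\<forall>y \<in> insert x (nbrs E x). \<eta> i y \<noteq> \<eta> j y)) \<and>
       (\<forall>i<D. mset (map (\<lambda>j. \<eta> i (\<eta> j x)) [0..<D]) = mset (map (\<lambda>j. \<eta> j (\<eta> i x)) [0..<D])))"

definition graph_laplacian :: "('a \<Rightarrow> 'a \<Rightarrow> bool) \<Rightarrow> real \<Rightarrow> ('a \<Rightarrow> real) \<Rightarrow> 'a \<Rightarrow> real" where
  "graph_laplacian E mu0 u x = (1 / mu0) * (\<Sum>y\<in>nbrs E x. u y - u x)"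

definition L_op :: "('a \<Rightarrow> 'a \<Rightarrow> bool) \<Rightarrow> real \<Rightarrow> ('a \<Rightarrow> real) \<Rightarrow> 'a \<Rightarrow> real" where
  "L_op E mu0 u x = - graph_laplacian E mu0 u x"

definition Psi :: "('a \<Rightarrow> 'a \<Rightarrow> bool) \<Rightarrow> real \<Rightarrow> (real \<Rightarrow> real) \<Rightarrow> ('a \<Rightarrow> real) \<Rightarrow> 'a \<Rightarrow> real" where
  "Psi E mu0 H v x = (1 / mu0) * (\<Sum>y\<in>nbrs E x. H (v y - v x))"

definition Upsilon' :: "real \<Rightarrow> real" where
  "Upsilon' z = exp z - 1"

definition L_alpha :: "('a \<Rightarrow> 'a \<Rightarrow> bool) \<Rightarrow> real \<Rightarrow> real \<Rightarrow> ('a \<Rightarrow> real) \<Rightarrow> 'a \<Rightarrow> real" where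
  "L_alpha E mu0 \<alpha> v x = - (1 / \<alpha>) * Psi E mu0 Upsilon' (\<lambda>z. \<alpha> * v z) x"

definition C_alpha :: "('a \<Rightarrow> 'a \<Rightarrow> bool) \<Rightarrow> real \<Rightarrow> real \<Rightarrow> ('a \<Rightarrow> real) \<Rightarrow> 'a \<Rightarrow> real" where
  "C_alpha E mu0 \<alpha> v x = (1 / mu0) * (\<Sum>y\<in>nbrs E x.
      exp (\<alpha> * (v y - v x)) * (Psi E mu0 Upsilon' v y - Psi E mu0 Upsilon' v x))"

definition F_alpha :: "nat \<Rightarrow> real \<Rightarrow> real \<Rightarrow> real \<Rightarrow> real" where
  "F_alpha D mu0 \<alpha> a = (real D / mu0 ^ 2) * exp (- (mu0 * (1 - \<alpha>) / real D) * a) *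
     (exp ((2 * (1 - \<alpha>) * mu0 / real D) * a) + ((1 - \<alpha>) / \<alpha>) * exp (- (2 * \<alpha> * mu0 / real D) * a) - 1 / \<alpha>)"

end

theory Submission
  imports Defs "HOL-Combinatorics.Transposition"
begin

definition Pf :: "real \<Rightarrow> real \<Rightarrow> real \<Rightarrow> real" where
  "Pf a u v = exp ((a-1) * v) + ((1-a)/a) * exp (u + a * v) - (1/a) * exp ((1-a) * u)"

definition phif :: "real \<Rightarrow> real \<Rightarrow> real" where
  "phif a m = Pf a m m"

lemma exp_amgm:
  fixes a x y :: real
  assumes "0 \<le> a" "a \<le> 1"
  shows "exp (a * x + (1-a) * y) \<le> a * exp x + (1-a) * exp y"
proof -
  have "exp ((1 - (1-a)) *\<^sub>R x + (1-a) *\<^sub>R y) \<le> (1 - (1-a)) * exp x + (1-a) * exp y"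
    using convex_onD[OF exp_convex, of "1-a" x y] assms by simp
  then show ?thesis by simp
qed

lemma exp_tangent:
  fixes a u r :: real
  assumes "0 < a" "a \<le> 1"
  shows "exp ((a-1) * u + r) \<ge> (1 - 1/a) * exp (a * u) + exp (a * r) / a"
proof -
  have h: "exp (a * (r-u) + (1-a) * 0) \<le> a * exp (r-u) + (1-a) * exp 0"
    using exp_amgm[of a "r-u" 0] assms by simp
  have ee: "(a-1) * u + r = a * u + (r - u)" by (simp add: algebra_simps)
  have e1: "exp ((a-1) * u + r) = exp (a * u) * exp (r - u)" unfolding ee by (simp only: exp_add)
  have ee2: "a * r = a * u + a * (r - u)" by (simp add: algebra_simps)
  have e2: "exp (a * r) = exp (a * u) * exp (a * (r-u))" by (subst ee2) (simp only: exp_add)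
  have "exp (a * (r-u)) \<le> a * exp (r-u) + (1-a)" using h by simp
  hence "exp (a * u) * exp (a * (r-u)) \<le> exp (a * u) * (a * exp (r-u) + (1-a))"
    by (simp add: mult_left_mono)
  hence "exp (a * r) \<le> a * exp ((a-1) * u + r) + (1-a) * exp (a * u)"
    using e1 e2 by (simp add: algebra_simps)
  hence "exp (a * r) / a \<le> exp ((a-1) * u + r) + ((1-a)/a) * exp (a * u)"
    using assms by (simp add: divide_simps algebra_simps)
  moreover have "(1 - 1/a) = - ((1-a)/a)" using assms by (simp add: field_simps)
  ultimately show ?thesis by simp
qed

lemma phif_nonneg:
  fixes a m :: real
  assumes "0 < a" "a < 1"
  shows "phif a m \<ge> 0"
proof -
  have h: "exp (a * ((a-1) * m) + (1-a) * ((1+a) * m)) \<le> a * exp ((a-1) * m) + (1-a) * exp ((1+a) * m)"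
    using exp_amgm[of a] assms by simp
  have "a * ((a-1) * m) + (1-a) * ((1+a) * m) = (1-a) * m" by (simp add: algebra_simps)
  with h have h2: "exp ((1-a) * m) \<le> a * exp ((a-1) * m) + (1-a) * exp ((1+a) * m)" by simp
  have "phif a m = (1/a) * (a * exp ((a-1) * m) + (1-a) * exp ((1+a) * m) - exp ((1-a) * m))"
    using assms unfolding phif_def Pf_def by (simp add: field_simps)
  also have "\<dots> \<ge> 0" using h2 assms by simp
  finally show ?thesis .
qed

lemma Pf_shift:
  fixes a m s :: real
  shows "Pf a (m+s) (m-s) = exp ((1-a) * s) * phif a m"
proof -
  have 1: "exp ((a-1) * (m-s)) = exp ((1-a) * s) * exp ((a-1) * m)"
    by (simp add: mult_exp_exp algebra_simps)
  have 2: "exp ((m+s) + a * (m-s)) = exp ((1-a) * s) * exp (m + a * m)"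
    by (simp add: mult_exp_exp algebra_simps)
  have 3: "exp ((1-a) * (m+s)) = exp ((1-a) * s) * exp ((1-a) * m)"
    by (simp add: mult_exp_exp algebra_simps)
  show ?thesis unfolding phif_def Pf_def 1 2 3 by (simp add: algebra_simps)
qed

lemma Pf_pair:
  fixes a x y :: real
  assumes "0 < a" "a < 1"
  shows "Pf a x y + Pf a y x \<ge> 2 * phif a ((x+y)/2)"
proof -
  define m where "m = (x+y)/2"
  define s where "s = (x-y)/2"
  have x: "x = m + s" and y: "y = m - s" by (simp_all add: m_def s_def field_simps)
  have y': "y = m + (-s)" and x': "x = m - (-s)" by (simp_all add: x y)
  have p1: "Pf a x y = exp ((1-a) * s) * phif a m" using Pf_shift[of a m s] x y by simp
  have p2: "Pf a y x = exp ((1-a) * (-s)) * phif a m" using Pf_shift[of a m "-s"] x y by simp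
  have "Pf a x y + Pf a y x = (exp ((1-a) * s) + exp ((1-a) * (-s))) * phif a m"
    using p1 p2 by (simp add: algebra_simps)
  moreover have "exp ((1-a) * s) + exp ((1-a) * (-s)) \<ge> 2"
  proof -
    have "exp ((1-a) * s) + exp (-((1-a) * s)) \<ge> 2"
      using exp_ge_add_one_self[of "(1-a) * s"] exp_ge_add_one_self[of "-((1-a) * s)"] by linarith
    thus ?thesis by simp
  qed
  moreover have "phif a m \<ge> 0" using phif_nonneg assms by simp
  ultimately show ?thesis unfolding m_def by (simp add: mult_right_mono)
qed

lemma phif_convex:
  fixes a :: real
  assumes "0 < a" "a < 1"
  shows "convex_on UNIV (phif a)"
proof (rule f''_ge0_imp_convex[where f' = "\<lambda>m. (a-1) * exp ((a-1) * m) + ((1-a)/a) * (1+a) * exp ((1+a) * m) - (1/a) * (1-a) * exp ((1-a) * m)"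
     and f'' = "\<lambda>m. (a-1)^2 * exp ((a-1) * m) + ((1-a)/a) * (1+a)^2 * exp ((1+a) * m) - (1/a) * (1-a)^2 * exp ((1-a) * m)"])
  show "convex (UNIV::real set)" by simp
next
  fix m :: real
  have e: "\<And>m. phif a m = exp ((a-1) * m) + ((1-a)/a) * exp ((1+a) * m) - (1/a) * exp ((1-a) * m)"
    unfolding phif_def Pf_def by (simp add: algebra_simps)
  show "DERIV (phif a) m :> (a-1) * exp ((a-1) * m) + ((1-a)/a) * (1+a) * exp ((1+a) * m) - (1/a) * (1-a) * exp ((1-a) * m)"
    unfolding e[abs_def] using assms
    by (auto intro!: derivative_eq_intros simp: field_simps)
  show "DERIV (\<lambda>m. (a-1) * exp ((a-1) * m) + ((1-a)/a) * (1+a) * exp ((1+a) * m) - (1/a) * (1-a) * exp ((1-a) * m)) m :>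
     (a-1)^2 * exp ((a-1) * m) + ((1-a)/a) * (1+a)^2 * exp ((1+a) * m) - (1/a) * (1-a)^2 * exp ((1-a) * m)"
    using assms by (auto intro!: derivative_eq_intros simp: field_simps power2_eq_square)
  have h: "exp (a * ((a-1) * m) + (1-a) * ((1+a) * m)) \<le> a * exp ((a-1) * m) + (1-a) * exp ((1+a) * m)"
    using exp_amgm[of a] assms by simp
  have "a * ((a-1) * m) + (1-a) * ((1+a) * m) = (1-a) * m" by (simp add: algebra_simps)
  with h have h2: "exp ((1-a) * m) \<le> a * exp ((a-1) * m) + (1-a) * exp ((1+a) * m)" by simp
  define e1 where "e1 = exp ((a-1) * m)"
  define e2 where "e2 = exp ((1+a) * m)"
  define e3 where "e3 = exp ((1-a) * m)"
  have p: "e1 > 0" "e2 > 0" using e1_def e2_def by auto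
  have h3: "e3 \<le> a * e1 + (1-a) * e2" using h2 unfolding e1_def e2_def e3_def .
  have "(1-a) * e3 \<le> (1-a) * (a * e1 + (1-a) * e2)" using h3 assms by (simp add: mult_left_mono)
  also have "\<dots> \<le> a * (1-a) * e1 + (1+a)^2 * e2"
    using assms p by (simp add: algebra_simps power2_eq_square) 
  finally have h4: "(1-a) * e3 \<le> a * (1-a) * e1 + (1+a)^2 * e2" .
  have "(a-1)^2 * e1 + ((1-a)/a) * (1+a)^2 * e2 - (1/a) * (1-a)^2 * e3
      = ((1-a)/a) * (a * (1-a) * e1 + (1+a)^2 * e2 - (1-a) * e3)"
    using assms by (simp add: field_simps power2_eq_square)
  also have "\<dots> \<ge> 0" using h4 assms by simp
  finally show "(a-1)^2 * exp ((a-1) * m) + ((1-a)/a) * (1+a)^2 * exp ((1+a) * m) - (1/a) * (1-a)^2 * exp ((1-a) * m) \<ge> 0"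
    unfolding e1_def e2_def e3_def .
qed

lemma supermod:
  fixes x1 x2 y1 y2 a :: real
  assumes "(x1 - x2) * (y1 - y2) \<ge> 0" "a \<ge> 0"
  shows "exp (x1 + a * y2) + exp (x2 + a * y1) \<le> exp (x1 + a * y1) + exp (x2 + a * y2)"
proof -
  have "0 \<le> (exp x1 - exp x2) * (exp (a * y1) - exp (a * y2))"
  proof (cases "x1 - x2 \<ge> 0 \<and> y1 - y2 \<ge> 0")
    case True
    then have "exp x1 \<ge> exp x2" "exp (a * y1) \<ge> exp (a * y2)" using assms(2) by (auto simp: mult_left_mono)
    then show ?thesis by simp
  next
    case False
    with assms(1) have "x1 - x2 \<le> 0 \<and> y1 - y2 \<le> 0" by (auto simp: zero_le_mult_iff)
    then have "exp x1 \<le> exp x2" "exp (a * y1) \<le> exp (a * y2)" using assms(2) by (auto simp: mult_left_mono)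
    then show ?thesis by (simp add: mult_nonpos_nonpos)
  qed
  then show ?thesis by (simp add: exp_add algebra_simps)
qed

lemma swap_improve:
  fixes u :: "'b \<Rightarrow> real" and a :: real
  assumes "finite J" "i \<in> J" "k \<in> J" "(u i - u k) * (u (p i) - u (p k)) \<ge> 0" "0 < a" "a < 1"
  shows "(\<Sum>x\<in>J. Pf a (u x) (u (p (Transposition.transpose i k x)))) \<le> (\<Sum>x\<in>J. Pf a (u x) (u (p x)))"
proof (cases "i = k")
  case True
  then show ?thesis by simp
next
  case False
  define R where "R = J - {i, k}"
  have J: "J = insert i (insert k R)" using assms False unfolding R_def by auto
  have nR: "i \<notin> R" "k \<notin> R" "finite R" using assms unfolding R_def by auto
  have eqR: "(\<Sum>x\<in>R. Pf a (u x) (u (p (Transposition.transpose i k x)))) = (\<Sum>x\<in>R. Pf a (u x) (u (p x)))"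
    by (rule sum.cong) (auto simp: R_def)
  have sm: "exp (u i + a * u (p k)) + exp (u k + a * u (p i)) \<le> exp (u i + a * u (p i)) + exp (u k + a * u (p k))"
    using supermod[OF assms(4)] assms(5) by simp
  have c: "(1-a)/a \<ge> 0" using assms by simp
  have key: "Pf a (u i) (u (p k)) + Pf a (u k) (u (p i)) \<le> Pf a (u i) (u (p i)) + Pf a (u k) (u (p k))"
  proof -
    have "((1-a)/a) * (exp (u i + a * u (p k)) + exp (u k + a * u (p i))) \<le> ((1-a)/a) * (exp (u i + a * u (p i)) + exp (u k + a * u (p k)))"
      using sm c by (rule mult_left_mono)
    then show ?thesis unfolding Pf_def by (simp add: algebra_simps)
  qed
  show ?thesis
    unfolding J using nR False key eqR by (simp add: sum.insert)
qed

lemma jensen2: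
  fixes a x y S :: real and n :: nat
  assumes "0 < a" "a < 1" "n = 0 \<Longrightarrow> S = 0"
  shows "2 * phif a ((x+y)/2) + n * phif a (S/n) \<ge> (n+2) * phif a ((x+y+S)/(n+2))"
proof (cases "n = 0")
  case True
  then show ?thesis using assms by simp
next
  case False
  define t :: real where "t = 2/(n+2)"
  have t: "0 \<le> t" "t \<le> 1" unfolding t_def by auto
  have "phif a ((1 - t) *\<^sub>R (S/n) + t *\<^sub>R ((x+y)/2)) \<le> (1 - t) * phif a (S/n) + t * phif a ((x+y)/2)"
    using convex_onD[OF phif_convex[OF assms(1,2)] t, of "S/n" "(x+y)/2"] by simp
  moreover have t1: "1 - t = n/(n+2)" unfolding t_def by (simp add: field_simps)
  moreover have "(1 - t) *\<^sub>R (S/n) + t *\<^sub>R ((x+y)/2) = (x+y+S)/(n+2)"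
  proof -
    have "(1 - t) * (S/n) = S/(n+2)" unfolding t1 using False by simp
    moreover have "t * ((x+y)/2) = (x+y)/(n+2)" unfolding t_def by (simp add: field_simps)
    ultimately show ?thesis by (simp add: add_divide_distrib)
  qed
  ultimately have "phif a ((x+y+S)/(n+2)) \<le> (n/(n+2)) * phif a (S/n) + (2/(n+2)) * phif a ((x+y)/2)"
    unfolding t_def by simp
  moreover have "(n/(n+2)) * phif a (S/n) + (2/(n+2)) * phif a ((x+y)/2) = (n * phif a (S/n) + 2 * phif a ((x+y)/2)) / (n+2)"
    by (simp add: add_divide_distrib)
  ultimately have "phif a ((x+y+S)/(n+2)) \<le> (n * phif a (S/n) + 2 * phif a ((x+y)/2)) / (n+2)" by simp
  hence "phif a ((x+y+S)/(n+2)) * (n+2) \<le> n * phif a (S/n) + 2 * phif a ((x+y)/2)"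
    by (simp add: le_divide_eq add_pos_pos)
  then show ?thesis by (simp add: algebra_simps)
qed

lemma perm_main:
  fixes u :: "'b \<Rightarrow> real" and a :: real
  assumes a: "0 < a" "a < 1"
  shows "finite J \<Longrightarrow> bij_betw p J J \<Longrightarrow>
    card J * phif a ((\<Sum>x\<in>J. u x) / card J) \<le> (\<Sum>x\<in>J. Pf a (u x) (u (p x)))"
proof (induction "card J" arbitrary: J p rule: less_induct)
  case less
  note fin = less.prems(1) and bij = less.prems(2)
  show ?case
  proof (cases "card J \<le> 1")
    case True
    then consider "card J = 0" | "card J = 1" by linarith
    then show ?thesis
    proof cases
      case 1
      then have "J = {}" using fin by simp
      then show ?thesis by simp
    next
      case 2
      then obtain j where J: "J = {j}" by (rule card_1_singletonE)
      then have "p j = j" using bij by (auto simp: bij_betw_def)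
      then show ?thesis using J by (simp add: phif_def)
    qed
  next
    case False
    then have Jne: "J \<noteq> {}" by auto
    obtain k0 where k0: "k0 \<in> J" "u k0 = Min (u ` J)"
    proof -
      have "Min (u ` J) \<in> u ` J" using Min_in[of "u ` J"] fin Jne by auto
      then obtain z where "z \<in> J" "Min (u ` J) = u z" by auto
      then show ?thesis using that by metis
    qed
    have k0min: "\<And>x. x \<in> J \<Longrightarrow> u k0 \<le> u x" using k0 fin by simp
    have J1a: "finite (J - {k0})" using fin by simp
    have "card (J - {k0}) = card J - 1" using k0 fin by (simp add: card_Diff_singleton)
    hence "card (J - {k0}) \<noteq> 0" using False by linarith
    hence J1b: "J - {k0} \<noteq> {}" by (metis card.empty)
    note J1 = J1a J1b
    obtain j0 where j0: "j0 \<in> J - {k0}" "u j0 = Max (u ` (J - {k0}))"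
    proof -
      have "Max (u ` (J - {k0})) \<in> u ` (J - {k0})" using Max_in[of "u ` (J - {k0})"] J1 by auto
      then obtain z where "z \<in> J - {k0}" "Max (u ` (J - {k0})) = u z" by auto
      then show ?thesis using that by metis
    qed
    have j0max: "\<And>x. x \<in> J \<Longrightarrow> u x \<le> u j0"
    proof -
      fix x assume "x \<in> J"
      show "u x \<le> u j0"
      proof (cases "x = k0")
        case True then show ?thesis using k0min[of j0] j0 by simp
      next
        case False then show ?thesis using j0 J1 \<open>x \<in> J\<close> by simp
      qed
    qed
    have j0J: "j0 \<in> J" and j0k0: "j0 \<noteq> k0" using j0 by auto
    have pJ: "p ` J = J" using bij by (simp add: bij_betw_def)
    obtain b where b: "b \<in> J" "p b = k0" using pJ k0 by (metis imageE)
    define p1 where "p1 = p \<circ> Transposition.transpose j0 b"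
    have bij1: "bij_betw p1 J J" unfolding p1_def
      by (rule bij_betw_trans[OF _ bij]) (simp add: j0J b)
    have s1: "(\<Sum>x\<in>J. Pf a (u x) (u (p1 x))) \<le> (\<Sum>x\<in>J. Pf a (u x) (u (p x)))"
      unfolding p1_def comp_def
    proof (rule swap_improve[OF fin j0J b(1) _ a])
      have "u j0 - u b \<ge> 0" using j0max b by simp
      moreover have "u (p j0) - u (p b) \<ge> 0" using b k0min pJ j0J by auto
      ultimately show "(u j0 - u b) * (u (p j0) - u (p b)) \<ge> 0" by simp
    qed
    have p1j0: "p1 j0 = k0" unfolding p1_def using b by simp
    have p1J: "p1 ` J = J" using bij1 by (simp add: bij_betw_def)
    obtain b' where b': "b' \<in> J" "p1 b' = j0" using p1J j0J by (metis imageE)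
    define p2 where "p2 = p1 \<circ> Transposition.transpose k0 b'"
    have bij2: "bij_betw p2 J J" unfolding p2_def
      by (rule bij_betw_trans[OF _ bij1]) (simp add: k0 b')
    have s2: "(\<Sum>x\<in>J. Pf a (u x) (u (p2 x))) \<le> (\<Sum>x\<in>J. Pf a (u x) (u (p1 x)))"
      unfolding p2_def comp_def
    proof (rule swap_improve[OF fin k0(1) b'(1) _ a])
      have "u k0 - u b' \<le> 0" using k0min b' by simp
      moreover have "u (p1 k0) - u (p1 b') \<le> 0" using b' j0max p1J k0 by auto
      ultimately show "(u k0 - u b') * (u (p1 k0) - u (p1 b')) \<ge> 0" by (simp add: mult_nonpos_nonpos)
    qed
    have b'j0: "b' \<noteq> j0" using b' p1j0 j0k0 by auto
    have p2k0: "p2 k0 = j0" unfolding p2_def using b' by simp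
    have p2j0: "p2 j0 = k0" unfolding p2_def using b'j0 j0k0 p1j0 by simp
    define J' where "J' = J - {j0, k0}"
    have J: "J = insert j0 (insert k0 J')" using j0J k0 unfolding J'_def by auto
    have nJ': "j0 \<notin> J'" "k0 \<notin> J'" "finite J'" using fin unfolding J'_def by auto
    have cardJ: "card J = card J' + 2" using J nJ' j0k0 by simp
    have inj2: "inj_on p2 J" using bij2 by (simp add: bij_betw_def)
    have "p2 ` J' = J'"
    proof -
      have "p2 ` J' = p2 ` J - p2 ` {j0, k0}"
        unfolding J'_def by (rule inj_on_image_set_diff[OF inj2]) (use j0J k0 in auto)
      also have "\<dots> = J'" using bij2 p2k0 p2j0 unfolding J'_def by (auto simp: bij_betw_def)
      finally show ?thesis .
    qed
    moreover have "inj_on p2 J'" using inj2 unfolding J'_def by (rule inj_on_subset) auto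
    ultimately have bijJ': "bij_betw p2 J' J'" by (simp add: bij_betw_def)
    have IH: "card J' * phif a ((\<Sum>x\<in>J'. u x) / card J') \<le> (\<Sum>x\<in>J'. Pf a (u x) (u (p2 x)))"
      using less.hyps[of J' p2] cardJ nJ'(3) bijJ' by simp
    have sumP: "(\<Sum>x\<in>J. Pf a (u x) (u (p2 x))) = Pf a (u j0) (u k0) + Pf a (u k0) (u j0) + (\<Sum>x\<in>J'. Pf a (u x) (u (p2 x)))"
      using nJ' j0k0 p2j0 p2k0 by (subst J) (simp add: sum.insert)
    have sumu: "(\<Sum>x\<in>J. u x) = u j0 + u k0 + (\<Sum>x\<in>J'. u x)"
      using nJ' j0k0 by (subst J) (simp add: sum.insert)
    have pair: "Pf a (u j0) (u k0) + Pf a (u k0) (u j0) \<ge> 2 * phif a ((u j0 + u k0)/2)"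
      using Pf_pair a by simp
    have jen: "(card J' + 2) * phif a ((u j0 + u k0 + (\<Sum>x\<in>J'. u x)) / (card J' + 2))
        \<le> 2 * phif a ((u j0 + u k0)/2) + card J' * phif a ((\<Sum>x\<in>J'. u x) / card J')"
      using jensen2[OF a, of "card J'" "\<Sum>x\<in>J'. u x" "u j0" "u k0"] nJ' by auto
    have "card J * phif a ((\<Sum>x\<in>J. u x) / card J)
        = (card J' + 2) * phif a ((u j0 + u k0 + (\<Sum>x\<in>J'. u x)) / (card J' + 2))"
      using cardJ sumu by simp
    also have "\<dots> \<le> (\<Sum>x\<in>J. Pf a (u x) (u (p2 x)))"
      using jen pair IH sumP by linarith
    also have "\<dots> \<le> (\<Sum>x\<in>J. Pf a (u x) (u (p x)))" using s1 s2 by linarith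
    finally show ?thesis .
  qed
qed


lemma main_column:
  fixes a U K :: real and uu r :: "nat \<Rightarrow> real"
  assumes a: "0 < a" "a < 1" and ii: "ii < D" and ri0: "r ii = -U"
    and cons: "(\<Sum>j<D. exp (a * r j)) \<ge> (\<Sum>j<D. exp (a * uu j)) - K"
  shows "(\<Sum>j<D. exp (U + (a-1) * uu j + r j)) \<ge>
     exp U * (\<Sum>j<D. exp (a * uu j)) + Pf a U (uu ii) - (1/a) * exp U * K"
proof -
  define T where "T j = exp U * ((1 - 1/a) * exp (a * uu j) + exp (a * r j) / a)" for j
  have tj: "exp (U + (a-1) * uu j + r j) \<ge> T j" for j
  proof -
    have "exp (U + (a-1) * uu j + r j) = exp U * exp ((a-1) * uu j + r j)"
      by (simp add: exp_add[symmetric] add.assoc)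
    moreover have "exp ((a-1) * uu j + r j) \<ge> (1 - 1/a) * exp (a * uu j) + exp (a * r j) / a"
      using exp_tangent a by simp
    ultimately show ?thesis unfolding T_def by (simp add: mult_left_mono)
  qed
  have fin: "finite {..<D}" by simp
  have iiin: "ii \<in> {..<D}" using ii by simp
  have "(\<Sum>j<D. exp (U + (a-1) * uu j + r j)) = exp (U + (a-1) * uu ii + r ii) + (\<Sum>j\<in>{..<D}-{ii}. exp (U + (a-1) * uu j + r j))"
    by (rule sum.remove[OF fin iiin])
  also have "(\<Sum>j\<in>{..<D}-{ii}. exp (U + (a-1) * uu j + r j)) \<ge> (\<Sum>j\<in>{..<D}-{ii}. T j)"
    by (rule sum_mono) (rule tj)
  moreover have "(\<Sum>j<D. T j) = T ii + (\<Sum>j\<in>{..<D}-{ii}. T j)"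
    by (rule sum.remove[OF fin iiin])
  ultimately have s1: "(\<Sum>j<D. exp (U + (a-1) * uu j + r j)) \<ge> exp (U + (a-1) * uu ii + r ii) + (\<Sum>j<D. T j) - T ii"
    by linarith
  have sT: "(\<Sum>j<D. T j) = exp U * ((1 - 1/a) * (\<Sum>j<D. exp (a * uu j)) + (\<Sum>j<D. exp (a * r j)) / a)"
    unfolding T_def by (simp add: sum_distrib_left[symmetric] sum.distrib sum_divide_distrib[symmetric] flip: sum_distrib_left)
  have "(1 - 1/a) * (\<Sum>j<D. exp (a * uu j)) + (\<Sum>j<D. exp (a * r j)) / a \<ge>
        (1 - 1/a) * (\<Sum>j<D. exp (a * uu j)) + ((\<Sum>j<D. exp (a * uu j)) - K) / a"
    using cons a by (simp add: divide_right_mono)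
  also have "(1 - 1/a) * (\<Sum>j<D. exp (a * uu j)) + ((\<Sum>j<D. exp (a * uu j)) - K) / a = (\<Sum>j<D. exp (a * uu j)) - K / a"
    using a by (simp add: field_simps)
  finally have sT2: "(\<Sum>j<D. T j) \<ge> exp U * ((\<Sum>j<D. exp (a * uu j)) - K / a)"
    unfolding sT by (simp add: mult_left_mono)
  have e0: "exp (U + (a-1) * uu ii + r ii) = exp ((a-1) * uu ii)" using ri0 by simp
  have e1: "exp U * exp (a * uu ii) = exp (U + a * uu ii)" by (simp add: exp_add)
  have e2: "exp U * exp (a * r ii) = exp ((1-a) * U)" using ri0 by (simp add: exp_add[symmetric] algebra_simps)
  have Ti0: "T ii = (1 - 1/a) * exp (U + a * uu ii) + exp ((1-a) * U) / a"
    unfolding T_def using e1 e2 by (simp add: algebra_simps)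
  have c: "(1 - 1/a) = - ((1-a)/a)" using a by (simp add: field_simps)
  have s1': "(\<Sum>j<D. exp (U + (a-1) * uu j + r j)) \<ge> exp ((a-1) * uu ii) + (\<Sum>j<D. T j) - T ii"
    using s1 unfolding e0 .
  have Ti0': "T ii = - ((1-a)/a) * exp (U + a * uu ii) + (1/a) * exp ((1-a) * U)"
    unfolding Ti0 c by simp
  have "exp U * ((\<Sum>j<D. exp (a * uu j)) - K / a) = exp U * (\<Sum>j<D. exp (a * uu j)) - (1/a) * exp U * K"
    by (simp add: algebra_simps)
  with sT2 have sT2': "(\<Sum>j<D. T j) \<ge> exp U * (\<Sum>j<D. exp (a * uu j)) - (1/a) * exp U * K" by simp
  show ?thesis unfolding Pf_def using s1' Ti0' sT2' by linarith
qed


lemma sum_lessThan_list: "(\<Sum>j<D. g j) = sum_list (map g [0..<D])"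
  by (simp add: sum_set_upt_conv_sum_list_nat[symmetric] atLeast0LessThan)

lemma sum_mset_swap:
  assumes "mset (map g1 [0..<D]) = mset (map g2 [0..<D])"
  shows "(\<Sum>j<D. f (g1 j)) = (\<Sum>j<D. f (g2 j))"
proof -
  have "(\<Sum>j<D. f (g1 j)) = sum_list (map f (map g1 [0..<D]))"
    by (simp add: sum_lessThan_list comp_def)
  also have "\<dots> = sum_mset (image_mset f (mset (map g1 [0..<D])))"
    by (metis mset_map sum_mset_sum_list)
  also have "\<dots> = sum_mset (image_mset f (mset (map g2 [0..<D])))" using assms by simp
  also have "\<dots> = sum_list (map f (map g2 [0..<D]))"
    by (metis mset_map sum_mset_sum_list)
  also have "\<dots> = (\<Sum>j<D. f (g2 j))"
    by (simp add: sum_lessThan_list comp_def)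
  finally show ?thesis .
qed

theorem corollary5p1:
  fixes E :: "'a \<Rightarrow> 'a \<Rightarrow> bool" and D :: nat and mu0 \<alpha> :: real
    and xs :: 'a and \<psi> v :: "'a \<Rightarrow> real"
  assumes "ricci_flat E D" and "D \<ge> 2" and "mu0 > 0"
    and "0 < \<alpha>" and "\<alpha> < 1"
    and "\<psi> xs > 0" and "\<forall>y. E xs y \<longrightarrow> \<psi> y > 0"
    and "\<psi> xs * L_alpha E mu0 \<alpha> v xs > 0"
    and "\<forall>y. E xs y \<longrightarrow> \<psi> xs * L_alpha E mu0 \<alpha> v xs \<ge> \<psi> y * L_alpha E mu0 \<alpha> v y"
  shows "C_alpha E mu0 \<alpha> v xs \<ge> F_alpha D mu0 \<alpha> (L_op E mu0 v xs)
     - (1 / mu0) * L_alpha E mu0 \<alpha> v xs *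
       (\<Sum>y\<in>nbrs E xs. exp (v y - v xs) * \<bar>\<psi> xs - \<psi> y\<bar> / \<psi> y)"
proof -
  note rf = assms(1)[unfolded ricci_flat_def regular_graph_def]
  have sym: "\<And>x y. E x y \<Longrightarrow> E y x" using rf by blast
  have finN: "\<And>x. finite (nbrs E x)" and cardN: "\<And>x. card (nbrs E x) = D" using rf by blast+
  obtain \<eta> :: "nat \<Rightarrow> 'a \<Rightarrow> 'a" where
    h1: "\<forall>i<D. \<forall>y \<in> insert xs (nbrs E xs). E y (\<eta> i y)" and
    h2: "\<forall>i<D. \<forall>j<D. i \<noteq> j \<longrightarrow> (\<forall>y \<in> insert xs (nbrs E xs). \<eta> i y \<noteq> \<eta> j y)" and
    h3: "\<forall>i<D. mset (map (\<lambda>j. \<eta> i (\<eta> j xs)) [0..<D]) = mset (map (\<lambda>j. \<eta> j (\<eta> i xs)) [0..<D])"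
    using rf by blast
  define y where "y i = \<eta> i xs" for i
  define N where "N = nbrs E xs"
  have inN: "\<And>z. z \<in> nbrs E w \<longleftrightarrow> E w z" for w by (simp add: nbrs_def)
  have Ey: "\<And>i. i < D \<Longrightarrow> E xs (y i)" using h1 unfolding y_def by blast
  have injy: "inj_on y {..<D}"
    using h2 unfolding y_def inj_on_def by blast
  have imgy: "y ` {..<D} = N"
  proof (rule card_subset_eq)
    show "finite N" unfolding N_def by (rule finN)
    show "y ` {..<D} \<subseteq> N" using Ey unfolding N_def by (auto simp: inN)
    show "card (y ` {..<D}) = card N" using card_image[OF injy] cardN unfolding N_def by simp
  qed
  have sumN: "\<And>f. (\<Sum>z\<in>N. f z) = (\<Sum>i<D. f (y i))"
    using sum.reindex[OF injy] imgy by (simp add: comp_def)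
  have yins: "\<And>j. j < D \<Longrightarrow> y j \<in> insert xs (nbrs E xs)" using Ey by (simp add: inN)
  have Eyy: "\<And>i j. i < D \<Longrightarrow> j < D \<Longrightarrow> E (y j) (\<eta> i (y j))" using h1 yins by blast
  have injNj: "inj_on (\<lambda>i. \<eta> i (y j)) {..<D}" if j: "j < D" for j
    using h2 yins[OF j] unfolding inj_on_def by blast
  have imgNj: "(\<lambda>i. \<eta> i (y j)) ` {..<D} = nbrs E (y j)" if j: "j < D" for j
  proof (rule card_subset_eq)
    show "finite (nbrs E (y j))" by (rule finN)
    show "(\<lambda>i. \<eta> i (y j)) ` {..<D} \<subseteq> nbrs E (y j)" using Eyy j by (auto simp: inN)
    show "card ((\<lambda>i. \<eta> i (y j)) ` {..<D}) = card (nbrs E (y j))" using card_image[OF injNj[OF j]] cardN by simp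
  qed
  have sumNj: "(\<Sum>z\<in>nbrs E (y j). f z) = (\<Sum>i<D. f (\<eta> i (y j)))" if j: "j < D" for f j
    using sum.reindex[OF injNj[OF j]] imgNj[OF j] by (simp add: comp_def)
  have swap: "\<And>f i. i < D \<Longrightarrow> (\<Sum>j<D. f (\<eta> i (y j))) = (\<Sum>j<D. f (\<eta> j (y i)))"
    using sum_mset_swap h3 unfolding y_def by blast
  have exi: "\<exists>i. i < D \<and> \<eta> i (y k) = xs" if k: "k < D" for k
  proof -
    have "xs \<in> nbrs E (y k)" using sym[OF Ey[OF k]] by (simp add: inN)
    then have "xs \<in> (\<lambda>i. \<eta> i (y k)) ` {..<D}" using imgNj[OF k] by simp
    then show ?thesis by auto
  qed
  define \<tau> where "\<tau> k = (SOME i. i < D \<and> \<eta> i (y k) = xs)" for k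
  have tau: "\<tau> k < D" "\<eta> (\<tau> k) (y k) = xs" if "k < D" for k
    using someI_ex[OF exi[OF that]] unfolding \<tau>_def by auto
  have inj_tau: "inj_on \<tau> {..<D}"
  proof (rule inj_onI)
    fix k k' assume k: "k \<in> {..<D}" and k': "k' \<in> {..<D}" and eq: "\<tau> k = \<tau> k'"
    define i where "i = \<tau> k"
    have iD: "i < D" using tau k unfolding i_def by simp
    have "distinct (map (\<lambda>j. \<eta> j (\<eta> i xs)) [0..<D])"
    proof -
      have "inj_on (\<lambda>j. \<eta> j (y i)) {0..<D}" using injNj[OF iD] by (simp add: atLeast0LessThan)
      then show ?thesis by (simp add: distinct_map y_def)
    qed
    hence "distinct (map (\<lambda>j. \<eta> i (\<eta> j xs)) [0..<D])"
      using h3 iD mset_eq_imp_distinct_iff by blast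
    hence "inj_on (\<lambda>j. \<eta> i (y j)) {0..<D}" by (simp add: distinct_map y_def)
    moreover have "\<eta> i (y k) = \<eta> i (y k')" using tau k k' eq unfolding i_def by (metis lessThan_iff)
    ultimately show "k = k'" using k k' by (auto simp: inj_on_def)
  qed
  have bij_tau: "bij_betw \<tau> {..<D} {..<D}"
    unfolding bij_betw_def using inj_tau endo_inj_surj[of "{..<D}" \<tau>] tau by auto
  define u where "u k = v (y k) - v xs" for k
  define r where "r j k = v (\<eta> j (y k)) - v (y k)" for j k
  define \<Lambda> where "\<Lambda> = L_alpha E mu0 \<alpha> v xs"
  define Sa where "Sa = (\<Sum>k<D. exp (\<alpha> * u k))"
  define S1 where "S1 = (\<Sum>k<D. exp (u k))"
  define \<delta> where "\<delta> k = \<bar>\<psi> xs - \<psi> (y k)\<bar> / \<psi> (y k)" for k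
  have mu: "mu0 > 0" and a: "0 < \<alpha>" "\<alpha> < 1" using assms by auto
  have Lpos: "\<Lambda> > 0" using assms(6,8) unfolding \<Lambda>_def by (simp add: zero_less_mult_iff)
  have LamE: "\<Lambda> = (1/(\<alpha>*mu0)) * (real D - Sa)"
  proof -
    have "\<Lambda> = -(1/\<alpha>) * ((1/mu0) * (\<Sum>z\<in>N. exp (\<alpha> * v z - \<alpha> * v xs) - 1))"
      unfolding \<Lambda>_def L_alpha_def Psi_def Upsilon'_def N_def by simp
    also have "(\<Sum>z\<in>N. exp (\<alpha> * v z - \<alpha> * v xs) - 1) = (\<Sum>k<D. exp (\<alpha> * u k) - 1)"
      unfolding sumN u_def by (simp add: algebra_simps)
    also have "\<dots> = Sa - real D" unfolding Sa_def by (simp add: sum_subtractf)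
    finally show ?thesis using a mu by (simp add: field_simps)
  qed
  have LyE: "L_alpha E mu0 \<alpha> v (y k) = (1/(\<alpha>*mu0)) * (real D - (\<Sum>j<D. exp (\<alpha> * r j k)))" if k: "k < D" for k
  proof -
    have "L_alpha E mu0 \<alpha> v (y k) = -(1/\<alpha>) * ((1/mu0) * (\<Sum>z\<in>nbrs E (y k). exp (\<alpha> * v z - \<alpha> * v (y k)) - 1))"
      unfolding L_alpha_def Psi_def Upsilon'_def by simp
    also have "(\<Sum>z\<in>nbrs E (y k). exp (\<alpha> * v z - \<alpha> * v (y k)) - 1) = (\<Sum>j<D. exp (\<alpha> * r j k) - 1)"
      unfolding sumNj[OF k] r_def by (simp add: algebra_simps)
    also have "\<dots> = (\<Sum>j<D. exp (\<alpha> * r j k)) - real D" by (simp add: sum_subtractf)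
    finally show ?thesis using a mu by (simp add: field_simps)
  qed
  have cons: "(\<Sum>j<D. exp (\<alpha> * r j k)) \<ge> Sa - \<alpha> * mu0 * \<delta> k * \<Lambda>" if k: "k < D" for k
  proof -
    have py: "\<psi> (y k) > 0" using assms(7) Ey[OF k] by blast
    have "\<psi> (y k) * L_alpha E mu0 \<alpha> v (y k) \<le> \<psi> xs * \<Lambda>" using assms(9) Ey[OF k] unfolding \<Lambda>_def by blast
    hence "L_alpha E mu0 \<alpha> v (y k) \<le> (\<psi> xs / \<psi> (y k)) * \<Lambda>" using py by (simp add: field_simps)
    also have "\<psi> xs / \<psi> (y k) \<le> 1 + \<delta> k"
    proof -
      have "\<psi> xs / \<psi> (y k) = 1 + (\<psi> xs - \<psi> (y k)) / \<psi> (y k)" using py by (simp add: field_simps)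
      also have "(\<psi> xs - \<psi> (y k)) / \<psi> (y k) \<le> \<delta> k" unfolding \<delta>_def using py by (simp add: divide_right_mono)
      finally show ?thesis by simp
    qed
    hence "(\<psi> xs / \<psi> (y k)) * \<Lambda> \<le> (1 + \<delta> k) * \<Lambda>" using Lpos by (intro mult_right_mono) auto
    finally have "(1/(\<alpha>*mu0)) * (real D - (\<Sum>j<D. exp (\<alpha> * r j k))) \<le> (1 + \<delta> k) * \<Lambda>" using LyE[OF k] by simp
    hence "real D - (\<Sum>j<D. exp (\<alpha> * r j k)) \<le> (\<alpha>*mu0) * ((1 + \<delta> k) * \<Lambda>)"
      using a mu by (simp add: field_simps)
    moreover have "(\<alpha>*mu0) * \<Lambda> = real D - Sa" using LamE a mu by (simp add: field_simps)
    ultimately show ?thesis by (simp add: algebra_simps)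
  qed
  have PsiY: "Psi E mu0 Upsilon' v (y j) = (1/mu0) * ((\<Sum>k<D. exp (r j k + u k - u j)) - real D)" if j: "j < D" for j
  proof -
    have "Psi E mu0 Upsilon' v (y j) = (1/mu0) * (\<Sum>z\<in>nbrs E (y j). exp (v z - v (y j)) - 1)"
      unfolding Psi_def Upsilon'_def by simp
    also have "(\<Sum>z\<in>nbrs E (y j). exp (v z - v (y j)) - 1) = (\<Sum>i<D. exp (v (\<eta> i (y j)) - v (y j)) - 1)"
      by (rule sumNj[OF j])
    also have "\<dots> = (\<Sum>k<D. exp (v (\<eta> j (y k)) - v (y j)) - 1)"
      using swap[OF j, of "\<lambda>z. exp (v z - v (y j)) - 1"] by simp
    also have "\<dots> = (\<Sum>k<D. exp (r j k + u k - u j) - 1)"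
      unfolding r_def u_def by (simp add: algebra_simps)
    also have "\<dots> = (\<Sum>k<D. exp (r j k + u k - u j)) - real D" by (simp add: sum_subtractf)
    finally show ?thesis .
  qed
  have PsiX: "Psi E mu0 Upsilon' v xs = (1/mu0) * (S1 - real D)"
  proof -
    have "Psi E mu0 Upsilon' v xs = (1/mu0) * (\<Sum>z\<in>N. exp (v z - v xs) - 1)"
      unfolding Psi_def Upsilon'_def N_def by simp
    also have "(\<Sum>z\<in>N. exp (v z - v xs) - 1) = (\<Sum>k<D. exp (u k) - 1)" unfolding sumN u_def ..
    also have "\<dots> = S1 - real D" unfolding S1_def by (simp add: sum_subtractf)
    finally show ?thesis .
  qed
  have Ceq: "C_alpha E mu0 \<alpha> v xs = (1/mu0^2) * ((\<Sum>k<D. \<Sum>j<D. exp (u k + (\<alpha>-1) * u j + r j k)) - Sa * S1)"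
  proof -
    have "C_alpha E mu0 \<alpha> v xs = (1/mu0) * (\<Sum>j<D. exp (\<alpha> * u j) * (Psi E mu0 Upsilon' v (y j) - Psi E mu0 Upsilon' v xs))"
      unfolding C_alpha_def N_def[symmetric] sumN u_def ..
    also have "(\<Sum>j<D. exp (\<alpha> * u j) * (Psi E mu0 Upsilon' v (y j) - Psi E mu0 Upsilon' v xs))
       = (\<Sum>j<D. (1/mu0) * ((\<Sum>k<D. exp (u k + (\<alpha>-1) * u j + r j k)) - exp (\<alpha> * u j) * S1))"
    proof (rule sum.cong[OF refl])
      fix j assume "j \<in> {..<D}"
      hence j: "j < D" by simp
      have e: "exp (\<alpha> * u j) * exp (r j k + u k - u j) = exp (u k + (\<alpha>-1) * u j + r j k)" for k
        by (simp add: mult_exp_exp algebra_simps)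
      have "exp (\<alpha> * u j) * (Psi E mu0 Upsilon' v (y j) - Psi E mu0 Upsilon' v xs)
          = (1/mu0) * (exp (\<alpha> * u j) * (\<Sum>k<D. exp (r j k + u k - u j)) - exp (\<alpha> * u j) * S1)"
        unfolding PsiY[OF j] PsiX by (simp add: algebra_simps)
      also have "exp (\<alpha> * u j) * (\<Sum>k<D. exp (r j k + u k - u j)) = (\<Sum>k<D. exp (u k + (\<alpha>-1) * u j + r j k))"
        by (simp add: sum_distrib_left e)
      finally show "exp (\<alpha> * u j) * (Psi E mu0 Upsilon' v (y j) - Psi E mu0 Upsilon' v xs)
          = (1/mu0) * ((\<Sum>k<D. exp (u k + (\<alpha>-1) * u j + r j k)) - exp (\<alpha> * u j) * S1)" .
    qed
    also have "\<dots> = (1/mu0) * ((\<Sum>j<D. \<Sum>k<D. exp (u k + (\<alpha>-1) * u j + r j k)) - Sa * S1)"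
      unfolding Sa_def by (simp add: sum_distrib_left[symmetric] sum_subtractf sum_distrib_right sum_divide_distrib[symmetric] diff_divide_distrib)
    also have "(\<Sum>j<D. \<Sum>k<D. exp (u k + (\<alpha>-1) * u j + r j k)) = (\<Sum>k<D. \<Sum>j<D. exp (u k + (\<alpha>-1) * u j + r j k))"
      by (rule sum.swap)
    finally show ?thesis by (simp add: power2_eq_square)
  qed
  have colk: "(\<Sum>j<D. exp (u k + (\<alpha>-1) * u j + r j k)) \<ge> exp (u k) * Sa + Pf \<alpha> (u k) (u (\<tau> k)) - mu0 * \<Lambda> * (exp (u k) * \<delta> k)"
    if k: "k < D" for k
  proof -
    have ri0: "r (\<tau> k) k = - u k" unfolding r_def u_def using tau[OF k] by simp
    have cc: "(\<Sum>j<D. exp (\<alpha> * r j k)) \<ge> (\<Sum>j<D. exp (\<alpha> * u j)) - \<alpha> * mu0 * \<delta> k * \<Lambda>"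
      using cons[OF k] unfolding Sa_def .
    have "(\<Sum>j<D. exp (u k + (\<alpha>-1) * u j + r j k)) \<ge> exp (u k) * (\<Sum>j<D. exp (\<alpha> * u j)) + Pf \<alpha> (u k) (u (\<tau> k)) - (1/\<alpha>) * exp (u k) * (\<alpha> * mu0 * \<delta> k * \<Lambda>)"
      using main_column[where a=\<alpha> and ii="\<tau> k" and D=D and r="\<lambda>j. r j k" and U="u k" and uu=u and K="\<alpha> * mu0 * \<delta> k * \<Lambda>", OF a tau(1)[OF k] ri0 cc] .
    moreover have "(1/\<alpha>) * exp (u k) * (\<alpha> * mu0 * \<delta> k * \<Lambda>) = mu0 * \<Lambda> * (exp (u k) * \<delta> k)" using a by simp
    ultimately show ?thesis unfolding Sa_def by simp
  qed
  have sumcol: "(\<Sum>k<D. \<Sum>j<D. exp (u k + (\<alpha>-1) * u j + r j k)) \<ge> S1 * Sa + (\<Sum>k<D. Pf \<alpha> (u k) (u (\<tau> k))) - mu0 * \<Lambda> * (\<Sum>k<D. exp (u k) * \<delta> k)"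
  proof -
    have "(\<Sum>k<D. \<Sum>j<D. exp (u k + (\<alpha>-1) * u j + r j k)) \<ge> (\<Sum>k<D. exp (u k) * Sa + Pf \<alpha> (u k) (u (\<tau> k)) - mu0 * \<Lambda> * (exp (u k) * \<delta> k))"
      by (rule sum_mono) (use colk in simp)
    also have "(\<Sum>k<D. exp (u k) * Sa + Pf \<alpha> (u k) (u (\<tau> k)) - mu0 * \<Lambda> * (exp (u k) * \<delta> k))
       = S1 * Sa + (\<Sum>k<D. Pf \<alpha> (u k) (u (\<tau> k))) - mu0 * \<Lambda> * (\<Sum>k<D. exp (u k) * \<delta> k)"
      unfolding S1_def by (simp add: sum.distrib sum_subtractf sum_distrib_left sum_distrib_right)
    finally show ?thesis .
  qed
  have perm: "real D * phif \<alpha> ((\<Sum>k<D. u k) / real D) \<le> (\<Sum>k<D. Pf \<alpha> (u k) (u (\<tau> k)))"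
    using perm_main[OF a, of "{..<D}" \<tau> u] bij_tau by simp
  define m where "m = (\<Sum>k<D. u k) / real D"
  have Dpos: "real D > 0" using assms(2) by simp
  have Feq: "F_alpha D mu0 \<alpha> (L_op E mu0 v xs) = (real D / mu0^2) * phif \<alpha> m"
  proof -
    have "L_op E mu0 v xs = -((1/mu0) * (\<Sum>k<D. u k))"
      unfolding L_op_def graph_laplacian_def N_def[symmetric] sumN u_def ..
    also have "(\<Sum>k<D. u k) = real D * m" unfolding m_def using Dpos by simp
    finally have Lop: "L_op E mu0 v xs = -((1/mu0) * (real D * m))" .
    have x1: "- (mu0 * (1 - \<alpha>) / real D) * L_op E mu0 v xs = (1-\<alpha>) * m"
      unfolding Lop using Dpos mu by (simp add: field_simps)
    have x2: "(2 * (1 - \<alpha>) * mu0 / real D) * L_op E mu0 v xs = -(2*(1-\<alpha>) * m)"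
      unfolding Lop using Dpos mu by (simp add: field_simps)
    have x3: "- (2 * \<alpha> * mu0 / real D) * L_op E mu0 v xs = 2 * \<alpha> * m"
      unfolding Lop using Dpos mu by (simp add: field_simps)
    have "F_alpha D mu0 \<alpha> (L_op E mu0 v xs) = (real D / mu0^2) * exp ((1-\<alpha>) * m) *
        (exp (-(2*(1-\<alpha>) * m)) + ((1 - \<alpha>) / \<alpha>) * exp (2 * \<alpha> * m) - 1 / \<alpha>)"
      unfolding F_alpha_def x1 x2 x3 ..
    also have "\<dots> = (real D / mu0^2) * (exp ((1-\<alpha>) * m) * exp (-(2*(1-\<alpha>) * m)) + ((1 - \<alpha>) / \<alpha>) * (exp ((1-\<alpha>) * m) * exp (2 * \<alpha> * m)) - (1 / \<alpha>) * exp ((1-\<alpha>) * m))"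
      by (simp add: algebra_simps)
    also have "exp ((1-\<alpha>) * m) * exp (-(2*(1-\<alpha>) * m)) = exp ((\<alpha>-1) * m)"
      by (simp add: mult_exp_exp algebra_simps)
    also have "exp ((1-\<alpha>) * m) * exp (2 * \<alpha> * m) = exp (m + \<alpha> * m)"
      by (simp add: mult_exp_exp algebra_simps)
    finally show ?thesis unfolding phif_def Pf_def by simp
  qed
  have Rsum: "(\<Sum>y\<in>nbrs E xs. exp (v y - v xs) * \<bar>\<psi> xs - \<psi> y\<bar> / \<psi> y) = (\<Sum>k<D. exp (u k) * \<delta> k)"
    unfolding N_def[symmetric] sumN u_def \<delta>_def by simp
  define Q where "Q = (\<Sum>k<D. exp (u k) * \<delta> k)"
  have "C_alpha E mu0 \<alpha> v xs \<ge> (1/mu0^2) * (real D * phif \<alpha> m - mu0 * \<Lambda> * Q)"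
    unfolding Ceq Q_def
    using sumcol perm m_def mu by (intro mult_left_mono) (auto simp: algebra_simps)
  also have "(1/mu0^2) * (real D * phif \<alpha> m - mu0 * \<Lambda> * Q) = (real D / mu0^2) * phif \<alpha> m - (1/mu0) * \<Lambda> * Q"
    using mu by (simp add: field_simps power2_eq_square)
  finally show ?thesis unfolding Feq Rsum Q_def[symmetric] \<Lambda>_def[symmetric] .
qed
end
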